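(* Let $d\ge 2$. For $B\ge 1$ let $P_1(d,B)$ be the set of monic polynomials of degree $d$ with integer coefficients, all bounded in absolute value by $B$, and with constant coefficient $1$; let $R_1(d,B)\subseteq P_1(d,B)$ be the subset of those polynomials that are reducible over $\mathbb{Z}$. Then the coefficient vectors $(a_1,\dots,a_{d-1})$ of the polynomials in $R_1(d,B)$ (for all $B$) lie on an algebraic hypersurface of $\mathbb{C}^{d-1}$, and consequently \[\frac{|R_1(d,B)|}{|P_1(d,B)|}=O\!\left(\frac1B\right)\quad (B\to\infty).\] *)

theory Defs
  imports Complex_Main "HOL-Computational_Algebra.Polynomial" "HOL-Library.Landau_Symbols"
begin

definition P1 :: "nat \<Rightarrow> real \<Rightarrow> int poly set" where
  "P1 d B = {p. degree p = d \<and> lead_coeff p = 1 \<and> coeff p 0 = 1 \<and>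
                (\<forall>i. real_of_int \<bar>coeff p i\<bar> \<le> B)}"

definition R1 :: "nat \<Rightarrow> real \<Rightarrow> int poly set" where
  "R1 d B = {p \<in> P1 d B. \<not> irreducible p}"

text \<open>Coefficient vector (a_1,...,a_{d-1}), indexed by 0..d-2 (entry i is a_{i+1}),
  padded with zeros outside.\<close>
definition coeff_vec :: "nat \<Rightarrow> int poly \<Rightarrow> nat \<Rightarrow> int" where
  "coeff_vec d p = (\<lambda>i. if i < d - 1 then coeff p (Suc i) else 0)"

text \<open>A set of integer points of C^n (given as functions on {0..<n}) lies on an algebraic
  hypersurface: there is a nonzero complex polynomial in n variables, written as a finite
  sum of coefficients times distinct monomials (exponent vectors alpha supported in {0..<n}),
  vanishing on all of the points.\<close>
definition on_hypersurface :: "nat \<Rightarrow> (nat \<Rightarrow> int) set \<Rightarrow> bool" where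
  "on_hypersurface n A \<longleftrightarrow>
     (\<exists>S :: (nat \<Rightarrow> nat) set. \<exists>c :: (nat \<Rightarrow> nat) \<Rightarrow> complex.
        finite S \<and> (\<forall>\<alpha>\<in>S. \<forall>i\<ge>n. \<alpha> i = 0) \<and> (\<exists>\<alpha>\<in>S. c \<alpha> \<noteq> 0) \<and>
        (\<forall>a\<in>A. (\<Sum>\<alpha>\<in>S. c \<alpha> * (\<Prod>i<n. of_int (a i) ^ \<alpha> i)) = 0))"

end

theory Submission
  imports Defs "HOL-Library.Function_Algebras" "Berlekamp_Zassenhaus.Factor_Bound"
begin


hide_const (open) up_ring.coeff up_ring.monom module.smult

definition fscale :: "complex \<Rightarrow> ('x \<Rightarrow> complex) \<Rightarrow> ('x \<Rightarrow> complex)" where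
  "fscale c f = (\<lambda>x. c * f x)"

interpretation FV: vector_space fscale
  by unfold_locales (auto simp: fscale_def fun_eq_iff algebra_simps)

lemma fscale_apply: "fscale c f x = c * f x" by (simp add: fscale_def)

lemma FV_sum_apply: "(\<Sum>v\<in>T. fscale (u v) v) x = (\<Sum>v\<in>T. u v * v x)"
  by (induction T rule: infinite_finite_induct) (auto simp: fscale_apply)

definition boxN :: "nat \<Rightarrow> nat \<Rightarrow> (nat \<Rightarrow> nat) set" where
  "boxN m e = {\<beta>. (\<forall>j<m. \<beta> j \<le> e) \<and> (\<forall>j\<ge>m. \<beta> j = 0)}"

definition mono :: "nat \<Rightarrow> (nat \<Rightarrow> nat) \<Rightarrow> (nat \<Rightarrow> int) \<Rightarrow> complex" where
  "mono m \<beta> y = (\<Prod>j<m. complex_of_int (y j) ^ \<beta> j)"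

definition Msp :: "nat \<Rightarrow> nat \<Rightarrow> ((nat \<Rightarrow> int) \<Rightarrow> complex) set" where
  "Msp m e = FV.span ((\<lambda>\<beta>. mono m \<beta>) ` boxN m e)"

lemma mono_mult: "mono m \<beta> y * mono m \<gamma> y = mono m (\<lambda>j. \<beta> j + \<gamma> j) y"
  unfolding mono_def by (simp add: power_add prod.distrib)

lemma boxN_add: "\<beta> \<in> boxN m a \<Longrightarrow> \<gamma> \<in> boxN m b \<Longrightarrow> (\<lambda>j. \<beta> j + \<gamma> j) \<in> boxN m (a+b)"
  unfolding boxN_def by (auto simp: add_mono)

lemma boxN_mono: "a \<le> b \<Longrightarrow> boxN m a \<subseteq> boxN m b"
  unfolding boxN_def by auto

lemma Msp_mono: "a \<le> b \<Longrightarrow> Msp m a \<subseteq> Msp m b"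
  unfolding Msp_def by (intro FV.span_mono image_mono boxN_mono)

lemma Msp_mult_base:
  assumes "g \<in> Msp m b" "\<beta> \<in> boxN m a"
  shows "(\<lambda>y. mono m \<beta> y * g y) \<in> Msp m (a+b)"
  using assms(1) unfolding Msp_def
proof (induction rule: FV.span_induct_alt)
  case base
  have "(0::(nat\<Rightarrow>int)\<Rightarrow>complex) \<in> Msp m (a+b)" unfolding Msp_def by (rule FV.span_zero)
  moreover have "(\<lambda>y. mono m \<beta> y * (0::(nat\<Rightarrow>int)\<Rightarrow>complex) y) = 0" by (simp add: fun_eq_iff)
  moreover have "(\<lambda>y. (0::(nat\<Rightarrow>int)\<Rightarrow>complex) y * g y) = 0" by (simp add: fun_eq_iff)
  ultimately show ?case unfolding Msp_def by simp
next
  case (step c x y)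
  then obtain \<gamma> where \<gamma>: "\<gamma> \<in> boxN m b" "x = mono m \<gamma>" by auto
  have "(\<lambda>ya. mono m \<beta> ya * (fscale c x + y) ya) = fscale c (mono m (\<lambda>j. \<beta> j + \<gamma> j)) + (\<lambda>ya. mono m \<beta> ya * y ya)"
    using \<gamma> by (auto simp: fun_eq_iff algebra_simps mono_mult[symmetric] fscale_apply)
  moreover have "mono m (\<lambda>j. \<beta> j + \<gamma> j) \<in> FV.span ((\<lambda>\<beta>. mono m \<beta>) ` boxN m (a+b))"
    by (intro FV.span_base imageI boxN_add assms \<gamma>)
  ultimately show ?case using step by (auto intro!: FV.span_add FV.span_scale)
qed

lemma Msp_mult:
  assumes "f \<in> Msp m a" "g \<in> Msp m b"
  shows "(\<lambda>y. f y * g y) \<in> Msp m (a+b)"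
  using assms(1) unfolding Msp_def
proof (induction rule: FV.span_induct_alt)
  case base
  have "(0::(nat\<Rightarrow>int)\<Rightarrow>complex) \<in> Msp m (a+b)" unfolding Msp_def by (rule FV.span_zero)
  moreover have "(\<lambda>y. mono m \<beta> y * (0::(nat\<Rightarrow>int)\<Rightarrow>complex) y) = 0" by (simp add: fun_eq_iff)
  moreover have "(\<lambda>y. (0::(nat\<Rightarrow>int)\<Rightarrow>complex) y * g y) = 0" by (simp add: fun_eq_iff)
  ultimately show ?case unfolding Msp_def by simp
next
  case (step c x y)
  then obtain \<beta> where \<beta>: "\<beta> \<in> boxN m a" "x = mono m \<beta>" by auto
  have "(\<lambda>ya. (fscale c x + y) ya * g ya) = fscale c (\<lambda>ya. mono m \<beta> ya * g ya) + (\<lambda>ya. y ya * g ya)"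
    using \<beta> by (auto simp: fun_eq_iff algebra_simps fscale_apply)
  moreover have "(\<lambda>ya. mono m \<beta> ya * g ya) \<in> Msp m (a+b)"
    by (rule Msp_mult_base[OF assms(2) \<beta>(1)])
  ultimately show ?case using step unfolding Msp_def by (auto intro!: FV.span_add FV.span_scale)
qed

lemma Msp_const: "(\<lambda>y. c) \<in> Msp m a"
proof -
  have "(\<lambda>j. 0) \<in> boxN m a" by (auto simp: boxN_def)
  hence "mono m (\<lambda>j. 0) \<in> Msp m a" unfolding Msp_def by (intro FV.span_base imageI)
  hence "fscale c (mono m (\<lambda>j. 0)) \<in> Msp m a" unfolding Msp_def by (rule FV.span_scale)
  thus ?thesis by (simp add: fscale_def mono_def)
qed

lemma Msp_var: assumes "j < m" "1 \<le> a" shows "(\<lambda>y. complex_of_int (y j)) \<in> Msp m a"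
proof -
  have "(\<lambda>i. if i = j then 1 else 0) \<in> boxN m a" using assms by (auto simp: boxN_def)
  hence "mono m (\<lambda>i. if i = j then 1 else 0) \<in> Msp m a" unfolding Msp_def by (intro FV.span_base imageI)
  moreover have "mono m (\<lambda>i. if i = j then 1 else 0) = (\<lambda>y. complex_of_int (y j))"
  proof
    fix y :: "nat \<Rightarrow> int"
    have "(\<Prod>i<m. complex_of_int (y i) ^ (if i = j then 1 else 0)) = (\<Prod>i<m. if i = j then complex_of_int (y i) else 1)"
      by (rule prod.cong) auto
    also have "\<dots> = complex_of_int (y j)" using assms by (simp add: prod.delta)
    finally show "mono m (\<lambda>i. if i = j then 1 else 0) y = complex_of_int (y j)" unfolding mono_def .
  qed
  ultimately show ?thesis by simp
qed

lemma Msp_sum: "(\<And>i. i \<in> I \<Longrightarrow> f i \<in> Msp m a) \<Longrightarrow> (\<lambda>y. \<Sum>i\<in>I. f i y) \<in> Msp m a"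
proof -
  assume "\<And>i. i \<in> I \<Longrightarrow> f i \<in> Msp m a"
  hence "sum f I \<in> Msp m a" unfolding Msp_def by (rule FV.span_sum)
  moreover have "sum f I = (\<lambda>y. \<Sum>i\<in>I. f i y)"
    by (induction I rule: infinite_finite_induct) (auto simp: fun_eq_iff)
  ultimately show ?thesis by simp
qed

lemma Msp_power: "f \<in> Msp m a \<Longrightarrow> (\<lambda>y. f y ^ k) \<in> Msp m (k * a)"
proof (induction k)
  case 0 then show ?case using Msp_const[of 1 m 0] by simp
next
  case (Suc k)
  then show ?case using Msp_mult[OF Suc.prems Suc.IH[OF Suc.prems]] by (simp add: add.commute)
qed

lemma Msp_prod: "finite I \<Longrightarrow> (\<And>i. i \<in> I \<Longrightarrow> f i \<in> Msp m a) \<Longrightarrow>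
   (\<lambda>y. \<Prod>i\<in>I. f i y ^ k i) \<in> Msp m ((\<Sum>i\<in>I. k i) * a)"
proof (induction I rule: finite_induct)
  case empty then show ?case using Msp_const[of 1 m 0] by simp
next
  case (insert x F)
  have "(\<lambda>y. f x y ^ k x * (\<Prod>i\<in>F. f i y ^ k i)) \<in> Msp m (k x * a + (\<Sum>i\<in>F. k i) * a)"
    by (intro Msp_mult Msp_power insert) auto
  then show ?case using insert by (simp add: algebra_simps)
qed

definition cg :: "nat \<Rightarrow> int \<Rightarrow> (nat \<Rightarrow> int) \<Rightarrow> nat \<Rightarrow> int" where
  "cg k e y i = (if i = 0 then e else if i < k then y (i - 1) else if i = k then 1 else 0)"

definition ch :: "nat \<Rightarrow> nat \<Rightarrow> int \<Rightarrow> (nat \<Rightarrow> int) \<Rightarrow> nat \<Rightarrow> int" where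
  "ch d k e y i = (if i = 0 then e else if i < d - k then y (k + i - 2) else if i = d - k then 1 else 0)"

definition Gp :: "nat \<Rightarrow> int \<Rightarrow> (nat \<Rightarrow> int) \<Rightarrow> int poly" where
  "Gp k e y = Abs_poly (cg k e y)"

definition Hp :: "nat \<Rightarrow> nat \<Rightarrow> int \<Rightarrow> (nat \<Rightarrow> int) \<Rightarrow> int poly" where
  "Hp d k e y = Abs_poly (ch d k e y)"

lemma coeff_Gp: "coeff (Gp k e y) = cg k e y"
  unfolding Gp_def by (rule coeff_Abs_poly[of k]) (auto simp: cg_def)

lemma coeff_Hp: "coeff (Hp d k e y) = ch d k e y"
  unfolding Hp_def by (rule coeff_Abs_poly[of "d - k"]) (auto simp: ch_def)

lemma cg_Msp: assumes "k < d" shows "(\<lambda>y. complex_of_int (cg k e y i)) \<in> Msp (d - 2) 1"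
proof (cases "i = 0 \<or> i \<ge> k")
  case True
  hence "(\<lambda>y. complex_of_int (cg k e y i)) = (\<lambda>y. complex_of_int (if i = 0 then e else if i = k then 1 else 0))"
    by (auto simp: cg_def fun_eq_iff)
  then show ?thesis using Msp_const by metis
next
  case False
  hence "(\<lambda>y. complex_of_int (cg k e y i)) = (\<lambda>y. complex_of_int (y (i - 1)))"
    by (auto simp: cg_def fun_eq_iff)
  moreover have "i - 1 < d - 2" using False assms by auto
  ultimately show ?thesis using Msp_var by auto
qed

lemma ch_Msp: assumes "1 \<le> k" "k < d" shows "(\<lambda>y. complex_of_int (ch d k e y i)) \<in> Msp (d - 2) 1"
proof (cases "i = 0 \<or> i \<ge> d - k")
  case True
  hence "(\<lambda>y. complex_of_int (ch d k e y i)) = (\<lambda>y. complex_of_int (if i = 0 then e else if i = d - k then 1 else 0))"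
    by (auto simp: ch_def fun_eq_iff)
  then show ?thesis using Msp_const by metis
next
  case False
  hence "(\<lambda>y. complex_of_int (ch d k e y i)) = (\<lambda>y. complex_of_int (y (k + i - 2)))"
    by (auto simp: ch_def fun_eq_iff)
  moreover have "k + i - 2 < d - 2" using False assms by auto
  ultimately show ?thesis using Msp_var by auto
qed

lemma prod_coeff_Msp:
  assumes "1 \<le> k" "k < d"
  shows "(\<lambda>y. complex_of_int (coeff (Gp k e y * Hp d k e y) s)) \<in> Msp (d - 2) 2"
proof -
  have "(\<lambda>y. sum (\<lambda>i. complex_of_int (cg k e y i) * complex_of_int (ch d k e y (s - i))) {..s}) \<in> Msp (d - 2) 2"
    using Msp_mult[OF cg_Msp[OF assms(2)] ch_Msp[OF assms]] by (intro Msp_sum) (simp add: numeral_2_eq_2)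
  thus ?thesis by (simp add: coeff_mult coeff_Gp coeff_Hp)
qed

lemma factor_lemma:
  assumes "p \<in> R1 d B" "d \<ge> 2"
  shows "\<exists>k e g h. 1 \<le> k \<and> k < d \<and> (e = 1 \<or> e = -1) \<and> p = g * h \<and> degree g = k \<and> degree h = d - k
     \<and> lead_coeff g = 1 \<and> lead_coeff h = 1 \<and> coeff g 0 = e \<and> coeff h 0 = e"
proof -
  from assms have p: "degree p = d" "lead_coeff p = 1" "coeff p 0 = 1" "\<not> irreducible p"
    by (auto simp: R1_def P1_def)
  have p0: "p \<noteq> 0" using p by auto
  have pu: "\<not> is_unit p" using p assms(2) by (auto simp: is_unit_poly_iff)
  obtain a b where ab: "p = a * b" "\<not> is_unit a" "\<not> is_unit b"
    using p(4) p0 pu unfolding irreducible_def by blast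
  have a0: "a \<noteq> 0" "b \<noteq> 0" using ab p0 by auto
  have la: "lead_coeff a * lead_coeff b = 1" using p(2) ab(1) by (simp add: lead_coeff_mult)
  hence lab: "(lead_coeff a = 1 \<and> lead_coeff b = 1) \<or> (lead_coeff a = -1 \<and> lead_coeff b = -1)"
    by (simp add: zmult_eq_1_iff)
  have da: "degree a \<ge> 1"
  proof (rule ccontr)
    assume "\<not> degree a \<ge> 1"
    hence "degree a = 0" by simp
    hence "a = [:lead_coeff a:]" using degree_0_id[of a] by simp
    hence "is_unit a" using lab by (auto simp: is_unit_poly_iff intro!: exI[of _ "lead_coeff a"])
    thus False using ab by auto
  qed
  have db: "degree b \<ge> 1"
  proof (rule ccontr)
    assume "\<not> degree b \<ge> 1"
    hence "degree b = 0" by simp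
    hence "b = [:lead_coeff b:]" using degree_0_id[of b] by simp
    hence "is_unit b" using lab by (auto simp: is_unit_poly_iff intro!: exI[of _ "lead_coeff b"])
    thus False using ab by auto
  qed
  have dd: "degree a + degree b = d" using p(1) ab(1) a0 by (simp add: degree_mult_eq)
  define g where "g = smult (lead_coeff a) a"
  define h where "h = smult (lead_coeff b) b"
  have pgh: "p = g * h" unfolding g_def h_def using ab(1) la by (simp add: mult.commute)
  have dg: "degree g = degree a" "degree h = degree b" unfolding g_def h_def using lab by auto
  have lg: "lead_coeff g = 1" "lead_coeff h = 1" unfolding g_def h_def using lab by auto
  have "coeff g 0 * coeff h 0 = 1" using p(3) pgh by (simp add: coeff_mult_0)
  hence c0: "(coeff g 0 = 1 \<and> coeff h 0 = 1) \<or> (coeff g 0 = -1 \<and> coeff h 0 = -1)"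
    by (simp add: zmult_eq_1_iff)
  show ?thesis
    apply (rule exI[of _ "degree g"], rule exI[of _ "coeff g 0"], rule exI[of _ g], rule exI[of _ h])
    using da db dd dg lg c0 pgh by auto
qed

lemma param_lemma:
  assumes "1 \<le> k" "k < d" "degree g = k" "degree h = d - k"
     "lead_coeff g = 1" "lead_coeff h = 1" "coeff g 0 = e" "coeff h 0 = e"
     "\<And>i. \<bar>coeff g i\<bar> \<le> X" "\<And>i. \<bar>coeff h i\<bar> \<le> X" "X \<ge> 0"
  shows "\<exists>y. g = Gp k e y \<and> h = Hp d k e y \<and> (\<forall>j. \<bar>y j\<bar> \<le> X) \<and> (\<forall>j\<ge>d-2. y j = 0)"
proof -
  define y where "y = (\<lambda>j. if j < k - 1 then coeff g (j+1) else if j < d - 2 then coeff h (j + 2 - k) else 0)"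
  have "g = Gp k e y"
  proof (rule poly_eqI)
    fix i show "coeff g i = coeff (Gp k e y) i"
      unfolding coeff_Gp cg_def y_def using assms(1-8)
      by (auto intro: coeff_eq_0 simp: less_diff_conv)
  qed
  moreover have ar: "\<And>i. 0 < i \<Longrightarrow> Suc (Suc (k + i - 2)) - k = i" using assms(1) by auto
  have "h = Hp d k e y"
  proof (rule poly_eqI)
    fix i show "coeff h i = coeff (Hp d k e y) i"
      unfolding coeff_Hp ch_def y_def using assms(1-8)
      by (auto intro: coeff_eq_0 simp: less_diff_conv ar)
  qed
  moreover have "\<forall>j. \<bar>y j\<bar> \<le> X" unfolding y_def using assms(9-11) by auto
  moreover have "\<forall>j\<ge>d-2. y j = 0" unfolding y_def using assms(1,2) by auto
  ultimately show ?thesis by blast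
qed



lemma fsum_apply: "(sum f A) x = sum (\<lambda>a. f a x) A"
  by (induction A rule: infinite_finite_induct) auto

lemma card_fbox:
  assumes "finite (A::'a set)"
  shows "finite {f::nat\<Rightarrow>'a. (\<forall>j<m. f j \<in> A) \<and> (\<forall>j\<ge>m. f j = z)} \<and>
         card {f::nat\<Rightarrow>'a. (\<forall>j<m. f j \<in> A) \<and> (\<forall>j\<ge>m. f j = z)} = card A ^ m"
proof -
  let ?F = "{f::nat\<Rightarrow>'a. (\<forall>j<m. f j \<in> A) \<and> (\<forall>j\<ge>m. f j = z)}"
  have bij: "bij_betw (\<lambda>f. restrict f {..<m}) ?F (PiE {..<m} (\<lambda>_. A))"
  proof (rule bij_betw_byWitness[where f' = "\<lambda>g j. if j < m then g j else z"])
    show "\<forall>a\<in>?F. (\<lambda>j. if j < m then restrict a {..<m} j else z) = a"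
    proof
      fix a assume a: "a \<in> ?F"
      show "(\<lambda>j. if j < m then restrict a {..<m} j else z) = a"
      proof
        fix j show "(if j < m then restrict a {..<m} j else z) = a j"
          using a by (cases "j < m") auto
      qed
    qed
    show "\<forall>a'\<in>PiE {..<m} (\<lambda>_. A). restrict (\<lambda>j. if j < m then a' j else z) {..<m} = a'"
    proof
      fix a' assume a': "a' \<in> PiE {..<m} (\<lambda>_. A)"
      show "restrict (\<lambda>j. if j < m then a' j else z) {..<m} = a'"
      proof
        fix j show "restrict (\<lambda>j. if j < m then a' j else z) {..<m} j = a' j"
          using a' by (cases "j < m") (auto simp: PiE_iff extensional_def)
      qed
    qed
    show "(\<lambda>f. restrict f {..<m}) ` ?F \<subseteq> PiE {..<m} (\<lambda>_. A)"
      by (rule image_subsetI) (simp add: restrict_PiE_iff)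
    show "(\<lambda>g j. if j < m then g j else z) ` PiE {..<m} (\<lambda>_. A) \<subseteq> ?F"
    proof (rule image_subsetI)
      fix g assume "g \<in> PiE {..<m} (\<lambda>_. A)"
      thus "(\<lambda>j. if j < m then g j else z) \<in> ?F" by (simp add: PiE_iff)
    qed
  qed
  have f: "finite (PiE {..<m} (\<lambda>_. A))" using assms by (simp add: finite_PiE)
  have c: "card (PiE {..<m} (\<lambda>_. A)) = card A ^ m" by (simp add: card_PiE)
  show ?thesis using bij_betw_finite[OF bij] bij_betw_same_card[OF bij] f c by simp
qed

lemma boxN_alt: "boxN m e = {\<beta>. (\<forall>j<m. \<beta> j \<in> {..e}) \<and> (\<forall>j\<ge>m. \<beta> j = 0)}"
  unfolding boxN_def by auto

lemma boxN_fin: "finite (boxN m e)" and boxN_card: "card (boxN m e) = (e+1)^m"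
  using card_fbox[of "{..e}" m 0] unfolding boxN_alt[symmetric] by auto

lemma l2_bound:
  assumes "p \<in> P1 d B"
  shows "mahler_measure p \<le> (real d + 1) * B"
proof -
  have p: "degree p = d" "\<And>i. real_of_int \<bar>coeff p i\<bar> \<le> B" "p \<noteq> 0" "coeff p 0 = 1"
    using assms by (auto simp: P1_def)
  have B0: "B \<ge> 1" using p(2)[of 0] p(4) by simp
  define q where "q = map_poly complex_of_int p"
  have q0: "q \<noteq> 0" using p(3) unfolding q_def by (simp add: map_poly_eq_0_iff)
  have dq: "degree q = d" unfolding q_def using p(1) by (subst degree_map_poly) auto
  have cq: "coeff q i = complex_of_int (coeff p i)" for i unfolding q_def by (simp add: coeff_map_poly)
  have "(\<Sum>a\<leftarrow>coeffs q. (cmod a)\<^sup>2) = (\<Sum>i\<in>{0..<Suc d}. (cmod (coeff q i))\<^sup>2)"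
    using q0 dq unfolding coeffs_def by (simp add: interv_sum_list_conv_sum_set_nat o_def)
  also have "\<dots> \<le> of_nat (card {0..<Suc d}) * B\<^sup>2"
  proof (rule sum_bounded_above)
    fix i
    have "cmod (coeff q i) = real_of_int \<bar>coeff p i\<bar>" unfolding cq by (simp only: norm_of_int)
    hence "cmod (coeff q i) \<le> B" using p(2) by simp
    thus "(cmod (coeff q i))\<^sup>2 \<le> B\<^sup>2" using norm_ge_zero by (intro power_mono) auto
  qed
  also have "of_nat (card {0..<Suc d}) * B\<^sup>2 = ((real d + 1) * B)\<^sup>2 / (real d + 1)"
    by (simp add: power2_eq_square field_simps)
  also have "\<dots> \<le> ((real d + 1) * B)\<^sup>2 / 1" by (intro divide_left_mono) auto
  also have "\<dots> = ((real d + 1) * B)\<^sup>2" by simp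
  finally have S: "(\<Sum>a\<leftarrow>coeffs q. (cmod a)\<^sup>2) \<le> ((real d + 1) * B)\<^sup>2" .
  have "mahler_measure p = mahler_measure_poly q" unfolding mahler_measure_def q_def ..
  also have "\<dots> \<le> sqrt (\<Sum>a\<leftarrow>coeffs q. (cmod a)\<^sup>2)" by (rule Landau_inequality)
  also have "\<dots> \<le> sqrt (((real d + 1) * B)\<^sup>2)" using S by (rule real_sqrt_le_mono)
  also have "\<dots> = (real d + 1) * B" using B0 by simp
  finally show ?thesis .
qed

lemma factor_coeff_bound:
  assumes "p \<in> P1 d B" "g dvd p"
  shows "real_of_int \<bar>coeff g i\<bar> \<le> 2^d * (real d + 1) * B"
proof -
  have p0: "p \<noteq> 0" "degree p = d" using assms by (auto simp: P1_def)
  have dg: "degree g \<le> d" using dvd_imp_degree_le[OF assms(2) p0(1)] p0 by simp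
  have ch: "real (degree g choose i) \<le> 2^d"
  proof -
    have "degree g choose i \<le> 2 ^ degree g" by (rule binomial_le_pow2)
    also have "\<dots> \<le> 2 ^ d" using dg by (simp add: power_increasing)
    finally show ?thesis by (simp add: of_nat_le_iff[symmetric])
  qed
  have "real_of_int \<bar>coeff g i\<bar> \<le> (degree g choose i) * mahler_measure g" by (rule Mignotte_bound)
  also have "\<dots> \<le> 2^d * mahler_measure g" by (rule mult_right_mono[OF ch mahler_measure_ge_0])
  also have "\<dots> \<le> 2^d * mahler_measure p" using mahler_measure_dvd[OF p0(1) assms(2)] by simp
  also have "\<dots> \<le> 2^d * ((real d + 1) * B)" using l2_bound[OF assms(1)] by simp
  finally show ?thesis by simp
qed

definition NB :: "nat \<Rightarrow> real \<Rightarrow> int" where "NB d B = \<lfloor>2^d * (real d + 1) * B\<rfloor>"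

lemma param_bound:
  assumes "p \<in> R1 d B" "d \<ge> 2"
  shows "\<exists>k e y. 1 \<le> k \<and> k < d \<and> (e = 1 \<or> e = -1) \<and> p = Gp k e y * Hp d k e y \<and>
      (\<forall>j. \<bar>y j\<bar> \<le> NB d B) \<and> (\<forall>j\<ge>d-2. y j = 0)"
proof -
  obtain k e g h where kegh: "1 \<le> k" "k < d" "e = 1 \<or> e = -1" "p = g * h" "degree g = k" "degree h = d - k"
     "lead_coeff g = 1" "lead_coeff h = 1" "coeff g 0 = e" "coeff h 0 = e"
    using factor_lemma[OF assms] by blast
  have pP: "p \<in> P1 d B" using assms(1) by (simp add: R1_def)
  have "real_of_int \<bar>coeff p 0\<bar> \<le> B" "coeff p 0 = 1" using pP unfolding P1_def by blast+
  hence B1: "B \<ge> 1" by simp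
  have bg: "\<bar>coeff g i\<bar> \<le> NB d B" for i
    unfolding NB_def le_floor_iff using factor_coeff_bound[OF pP, of g i] kegh(4) by (simp add: dvd_triv_left dvd_triv_right)
  have bh: "\<bar>coeff h i\<bar> \<le> NB d B" for i
    unfolding NB_def le_floor_iff using factor_coeff_bound[OF pP, of h i] kegh(4) by (simp add: dvd_triv_left dvd_triv_right)
  have X0: "NB d B \<ge> 0" unfolding NB_def using B1 by simp
  obtain y where "g = Gp k e y" "h = Hp d k e y" "\<forall>j. \<bar>y j\<bar> \<le> NB d B" "\<forall>j\<ge>d-2. y j = 0"
    using param_lemma[OF kegh(1,2,5-10) bg bh X0] by blast
  thus ?thesis using kegh by blast
qed


lemma hypersurface_part:
  assumes d2: "d \<ge> 2"
  shows "on_hypersurface (d - 1) (coeff_vec d ` (\<Union>B\<in>{B. B \<ge> 1}. R1 d B))"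
proof -
  define n where "n = d - 1"
  define m where "m = d - 2"
  have nm: "n = Suc m" "d - 2 = m" using d2 unfolding n_def m_def by auto
  define K where "K = 2 * (d - 1) * (2 * n) ^ m"
  define D where "D = K"
  define E where "E = 2 * n * D"
  define S where "S = boxN n D"
  define I where "I = {1..<d} \<times> {1::int, -1}"
  define F where "F = (\<lambda>k e y i. complex_of_int (coeff (Gp k e y * Hp d k e y) (Suc i)))"
  define u where "u = (\<lambda>\<alpha> (q::nat\<times>int) y. \<Prod>i<n. F (fst q) (snd q) y i ^ \<alpha> i)"
  define W where "W = (\<lambda>q (f::(nat\<Rightarrow>int)\<Rightarrow>complex) (x::nat\<times>int\<times>(nat\<Rightarrow>int)).
                        if (fst x, fst (snd x)) = q then f (snd (snd x)) else 0)"
  define v where "v = (\<lambda>\<alpha>. \<Sum>q\<in>I. W q (u \<alpha> q))"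
  define T where "T = (\<lambda>(q,\<beta>). W q (mono m \<beta>)) ` (I \<times> boxN m E)"
  have finI: "finite I" unfolding I_def by simp
  have cardI: "card I = 2 * (d - 1)" unfolding I_def by (simp add: card_cartesian_product)
  have finS: "finite S" unfolding S_def by (rule boxN_fin)
  have cardS: "card S = (D + 1) ^ n" unfolding S_def by (rule boxN_card)
  have finT: "finite T" unfolding T_def using finI boxN_fin by simp
  have cardT: "card T \<le> 2 * (d - 1) * (E + 1) ^ m"
  proof -
    have "card T \<le> card (I \<times> boxN m E)" unfolding T_def by (rule card_image_le) (simp add: finI boxN_fin)
    also have "\<dots> = 2 * (d - 1) * (E + 1) ^ m" by (simp add: card_cartesian_product cardI boxN_card)
    finally show ?thesis .
  qed
  have TS: "card T < card S"
  proof -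
    have "E + 1 \<le> 2 * n * (D + 1)" unfolding E_def using nm by (simp add: algebra_simps)
    hence "(E + 1) ^ m \<le> (2 * n * (D + 1)) ^ m" by (rule power_mono) simp
    also have "(2 * n * (D + 1)) ^ m = (2 * n) ^ m * (D + 1) ^ m" by (simp only: power_mult_distrib)
    finally have "2 * (d - 1) * (E + 1) ^ m \<le> 2 * (d - 1) * ((2 * n) ^ m * (D + 1) ^ m)"
      by (rule mult_left_mono) simp
    also have "\<dots> = K * (D + 1) ^ m" unfolding K_def by simp
    also have "\<dots> < (D + 1) * (D + 1) ^ m" unfolding D_def by simp
    also have "\<dots> = card S" using cardS nm by simp
    finally show ?thesis using cardT by linarith
  qed
  have W_span: "W q f \<in> FV.span T" if f: "f \<in> Msp m E" and q: "q \<in> I" for q f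
    using f unfolding Msp_def
  proof (induction rule: FV.span_induct_alt)
    case base
    have "W q 0 = 0" unfolding W_def by (simp add: fun_eq_iff)
    then show ?case using FV.span_zero by metis
  next
    case (step c x y)
    then obtain \<beta> where \<beta>: "\<beta> \<in> boxN m E" "x = mono m \<beta>" by auto
    have "W q (fscale c x + y) = fscale c (W q x) + W q y"
      unfolding W_def by (auto simp: fun_eq_iff fscale_apply)
    moreover have "W q x \<in> T" unfolding T_def using \<beta> q by (auto intro!: image_eqI[of _ _ "(q, \<beta>)"])
    moreover have "fscale c (W q x) + W q y \<in> FV.span T"
      by (intro FV.span_add FV.span_scale FV.span_base \<open>W q x \<in> T\<close> step.IH)
    ultimately show ?case by metis
  qed
  have u_Msp: "u \<alpha> q \<in> Msp m E" if a: "\<alpha> \<in> S" and q: "q \<in> I" for \<alpha> q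
  proof -
    obtain k e where qk: "q = (k, e)" "1 \<le> k" "k < d" using q unfolding I_def by auto
    have "(\<lambda>y. \<Prod>i\<in>{..<n}. F k e y i ^ \<alpha> i) \<in> Msp m ((\<Sum>i\<in>{..<n}. \<alpha> i) * 2)"
      using prod_coeff_Msp[OF qk(2,3)] unfolding F_def nm(2) by (intro Msp_prod) auto
    moreover have "(\<Sum>i\<in>{..<n}. \<alpha> i) * 2 \<le> E"
    proof -
      have "(\<Sum>i\<in>{..<n}. \<alpha> i) \<le> of_nat (card {..<n}) * D"
        using a unfolding S_def boxN_def by (intro sum_bounded_above) auto
      thus ?thesis unfolding E_def by simp
    qed
    ultimately have "(\<lambda>y. \<Prod>i\<in>{..<n}. F k e y i ^ \<alpha> i) \<in> Msp m E" using Msp_mono by blast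
    thus ?thesis unfolding u_def qk by simp
  qed
  have v_span: "v \<alpha> \<in> FV.span T" if "\<alpha> \<in> S" for \<alpha>
    unfolding v_def by (intro FV.span_sum W_span u_Msp that)
  have v_eval: "v \<alpha> (k, e, y) = (if (k, e) \<in> I then u \<alpha> (k, e) y else 0)" for \<alpha> k e y
  proof -
    have "v \<alpha> (k, e, y) = (\<Sum>q\<in>I. W q (u \<alpha> q) (k, e, y))" unfolding v_def by (rule fsum_apply)
    also have "\<dots> = (\<Sum>q\<in>I. if (k, e) = q then u \<alpha> q y else 0)"
      by (rule sum.cong) (auto simp: W_def)
    also have "\<dots> = (if (k, e) \<in> I then u \<alpha> (k, e) y else 0)" using finI by (simp add: sum.delta)
    finally show ?thesis .
  qed
  have "\<exists>c. (\<exists>\<alpha>\<in>S. c \<alpha> \<noteq> 0) \<and> (\<forall>x. (\<Sum>\<alpha>\<in>S. c \<alpha> * v \<alpha> x) = 0)"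
  proof (cases "inj_on v S")
    case True
    have "card (v ` S) = card S" using True by (rule card_image)
    have "FV.dependent (v ` S)"
    proof (rule ccontr)
      assume ind: "FV.independent (v ` S)"
      have "v ` S \<subseteq> FV.span T" using v_span by auto
      from FV.independent_span_bound[OF finT ind this] have "card (v ` S) \<le> card T" by simp
      thus False using TS \<open>card (v ` S) = card S\<close> by simp
    qed
    then obtain U w where U: "finite U" "U \<subseteq> v ` S" "(\<Sum>z\<in>U. fscale (w z) z) = 0" "\<exists>z\<in>U. w z \<noteq> 0"
      unfolding FV.dependent_explicit by blast
    define c where "c = (\<lambda>\<alpha>. if v \<alpha> \<in> U then w (v \<alpha>) else 0)"
    have "(\<Sum>\<alpha>\<in>S. c \<alpha> * v \<alpha> x) = 0" for x
    proof -
      have "(\<Sum>\<alpha>\<in>S. c \<alpha> * v \<alpha> x) = (\<Sum>z\<in>v ` S. if z \<in> U then w z * z x else 0)"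
        unfolding c_def using True by (auto simp: sum.reindex intro!: sum.cong)
      also have "\<dots> = (\<Sum>z\<in>v ` S \<inter> U. w z * z x)" using finS by (simp add: sum.inter_restrict)
      also have "v ` S \<inter> U = U" using U(2) by blast
      also have "(\<Sum>z\<in>U. w z * z x) = (\<Sum>z\<in>U. fscale (w z) z) x" by (rule FV_sum_apply[symmetric])
      also have "\<dots> = 0" using U(3) by simp
      finally show ?thesis .
    qed
    moreover have "\<exists>\<alpha>\<in>S. c \<alpha> \<noteq> 0" using U(2,4) unfolding c_def by force
    ultimately show ?thesis by blast
  next
    case False
    then obtain \<alpha> \<beta> where ab: "\<alpha> \<in> S" "\<beta> \<in> S" "\<alpha> \<noteq> \<beta>" "v \<alpha> = v \<beta>"
      unfolding inj_on_def by blast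
    define c where "c = (\<lambda>\<gamma>. if \<gamma> = \<alpha> then 1 else if \<gamma> = \<beta> then -1 else (0::complex))"
    have "(\<Sum>\<gamma>\<in>S. c \<gamma> * v \<gamma> x) = 0" for x
    proof -
      have "(\<Sum>\<gamma>\<in>S. c \<gamma> * v \<gamma> x) = (\<Sum>\<gamma>\<in>S. (if \<gamma> = \<alpha> then v \<gamma> x else 0) - (if \<gamma> = \<beta> then v \<gamma> x else 0))"
        unfolding c_def using ab(3) by (intro sum.cong) auto
      also have "\<dots> = v \<alpha> x - v \<beta> x" using finS ab(1,2) by (simp add: sum_subtractf sum.delta')
      finally show ?thesis using ab(4) by simp
    qed
    moreover have "c \<alpha> \<noteq> 0" unfolding c_def by simp
    ultimately show ?thesis using ab(1) by blast
  qed
  then obtain c where c: "\<exists>\<alpha>\<in>S. c \<alpha> \<noteq> 0" "\<And>x. (\<Sum>\<alpha>\<in>S. c \<alpha> * v \<alpha> x) = 0" by blast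
  show ?thesis
    unfolding on_hypersurface_def n_def[symmetric]
  proof (intro exI[of _ S] exI[of _ c] conjI ballI allI impI)
    show "finite S" by (rule finS)
    show "\<And>\<alpha> i. \<alpha> \<in> S \<Longrightarrow> n \<le> i \<Longrightarrow> \<alpha> i = 0" unfolding S_def boxN_def by auto
    show "\<exists>\<alpha>\<in>S. c \<alpha> \<noteq> 0" by (rule c(1))
    fix a assume "a \<in> coeff_vec d ` (\<Union>B\<in>{B. B \<ge> 1}. R1 d B)"
    then obtain p B where pB: "p \<in> R1 d B" "a = coeff_vec d p" by auto
    obtain k e y where key: "1 \<le> k" "k < d" "e = 1 \<or> e = -1" "p = Gp k e y * Hp d k e y"
      using param_bound[OF pB(1) d2] by blast
    have kI: "(k, e) \<in> I" unfolding I_def using key by auto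
    have "(\<Sum>\<alpha>\<in>S. c \<alpha> * (\<Prod>i<n. complex_of_int (a i) ^ \<alpha> i)) = (\<Sum>\<alpha>\<in>S. c \<alpha> * v \<alpha> (k, e, y))"
    proof (rule sum.cong[OF refl])
      fix \<alpha> assume "\<alpha> \<in> S"
      have "(\<Prod>i<n. complex_of_int (a i) ^ \<alpha> i) = u \<alpha> (k, e) y"
        unfolding u_def F_def pB(2) coeff_vec_def key(4) n_def by (intro prod.cong) auto
      thus "c \<alpha> * (\<Prod>i<n. complex_of_int (a i) ^ \<alpha> i) = c \<alpha> * v \<alpha> (k, e, y)"
        using v_eval kI by simp
    qed
    also have "\<dots> = 0" by (rule c(2))
    finally show "(\<Sum>\<alpha>\<in>S. c \<alpha> * (\<Prod>i<n. complex_of_int (a i) ^ \<alpha> i)) = 0" .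
  qed
qed


lemma degree_Gp: assumes "1 \<le> k" shows "degree (Gp k e y) = k" "lead_coeff (Gp k e y) = 1"
proof -
  have "degree (Gp k e y) \<le> k" by (rule degree_le) (auto simp: coeff_Gp cg_def)
  moreover have "coeff (Gp k e y) k = 1" using assms by (simp add: coeff_Gp cg_def)
  hence "k \<le> degree (Gp k e y)" by (intro le_degree) simp
  ultimately show "degree (Gp k e y) = k" by simp
  thus "lead_coeff (Gp k e y) = 1" using \<open>coeff (Gp k e y) k = 1\<close> by simp
qed

definition Ybox :: "nat \<Rightarrow> int \<Rightarrow> (nat \<Rightarrow> int) set" where
  "Ybox m N = {y. (\<forall>j<m. y j \<in> {-N..N}) \<and> (\<forall>j\<ge>m. y j = 0)}"

lemma Ybox_fin: "finite (Ybox m N)" and Ybox_card: "card (Ybox m N) = nat (2 * N + 1) ^ m"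
  using card_fbox[of "{-N..N}" m 0] unfolding Ybox_def by auto

lemma card_P1:
  assumes "d \<ge> 2" "B \<ge> 1"
  shows "finite (P1 d B) \<and> card (P1 d B) = nat (2 * \<lfloor>B\<rfloor> + 1) ^ (d - 1)"
proof -
  let ?Y = "Ybox (d - 1) \<lfloor>B\<rfloor>"
  have "P1 d B = Gp d 1 ` ?Y"
  proof
    show "P1 d B \<subseteq> Gp d 1 ` ?Y"
    proof
      fix p assume p: "p \<in> P1 d B"
      hence pp: "degree p = d" "lead_coeff p = 1" "coeff p 0 = 1" "\<And>i. real_of_int \<bar>coeff p i\<bar> \<le> B"
        unfolding P1_def by blast+
      define y where "y = (\<lambda>j. if j < d - 1 then coeff p (Suc j) else 0)"
      have pG: "p = Gp d 1 y"
      proof (rule poly_eqI)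
        fix i show "coeff p i = coeff (Gp d 1 y) i"
          unfolding coeff_Gp cg_def y_def using pp(1-3) assms(1)
          by (auto intro: coeff_eq_0)
      qed
      have ab: "\<bar>coeff p (Suc j)\<bar> \<le> \<lfloor>B\<rfloor>" for j using pp(4) by (simp add: le_floor_iff)
      have "-\<lfloor>B\<rfloor> \<le> coeff p (Suc j) \<and> coeff p (Suc j) \<le> \<lfloor>B\<rfloor>" for j using ab[of j] by arith
      hence yY: "y \<in> ?Y" unfolding Ybox_def y_def by auto
      show "p \<in> Gp d 1 ` ?Y" using pG yY by blast
    qed
    show "Gp d 1 ` ?Y \<subseteq> P1 d B"
    proof
      fix p assume "p \<in> Gp d 1 ` ?Y"
      then obtain y where y: "y \<in> ?Y" "p = Gp d 1 y" by blast
      have "real_of_int \<bar>coeff p i\<bar> \<le> B" for i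
      proof -
        have "\<bar>y j\<bar> \<le> \<lfloor>B\<rfloor>" for j using y(1) unfolding Ybox_def using assms(2) by (cases "j < d - 1") auto
        hence "real_of_int \<bar>y j\<bar> \<le> B" for j by (meson floor_le_iff le_floor_iff of_int_floor_le order_trans of_int_le_iff)
        thus ?thesis unfolding y(2) coeff_Gp cg_def using assms by auto
      qed
      thus "p \<in> P1 d B" unfolding P1_def using degree_Gp[of d 1 y] assms y(2)
        by (auto simp: coeff_Gp cg_def)
    qed
  qed
  moreover have "inj_on (Gp d 1) ?Y"
  proof
    fix y y' assume yy: "y \<in> ?Y" "y' \<in> ?Y" "Gp d 1 y = Gp d 1 y'"
    show "y = y'"
    proof
      fix j
      show "y j = y' j"
      proof (cases "j < d - 1")
        case True
        have "cg d 1 y (Suc j) = cg d 1 y' (Suc j)" using yy(3) by (metis coeff_Gp)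
        thus ?thesis using True by (simp add: cg_def less_diff_conv split: if_splits)
      next
        case False thus ?thesis using yy(1,2) unfolding Ybox_def by auto
      qed
    qed
  qed
  ultimately show ?thesis using Ybox_fin Ybox_card by (simp add: card_image)
qed

lemma card_R1:
  assumes "d \<ge> 2" "B \<ge> 1"
  shows "card (R1 d B) \<le> 2 * (d - 1) * nat (2 * NB d B + 1) ^ (d - 2)"
proof -
  define I where "I = {1..<d} \<times> {1::int, -1}"
  define Y where "Y = Ybox (d - 2) (NB d B)"
  define f where "f = (\<lambda>q y. Gp (fst q) (snd q) y * Hp d (fst q) (snd q) y)"
  have finI: "finite I" unfolding I_def by simp
  have cardI: "card I = 2 * (d - 1)" unfolding I_def by (simp add: card_cartesian_product)
  have sub: "R1 d B \<subseteq> (\<Union>q\<in>I. f q ` Y)"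
  proof
    fix p assume "p \<in> R1 d B"
    from param_bound[OF this assms(1)] obtain k e y where key: "1 \<le> k" "k < d" "e = 1 \<or> e = -1"
      "p = Gp k e y * Hp d k e y" "\<forall>j. \<bar>y j\<bar> \<le> NB d B" "\<forall>j\<ge>d-2. y j = 0" by blast
    have "-NB d B \<le> y j \<and> y j \<le> NB d B" for j using key(5)[rule_format, of j] by arith
    hence "y \<in> Y" unfolding Y_def Ybox_def using key(6) by auto
    moreover have "(k, e) \<in> I" unfolding I_def using key by auto
    ultimately show "p \<in> (\<Union>q\<in>I. f q ` Y)" unfolding f_def using key(4) by force
  qed
  have fin: "finite (\<Union>q\<in>I. f q ` Y)" using finI Ybox_fin unfolding Y_def by simp
  have "card (R1 d B) \<le> card (\<Union>q\<in>I. f q ` Y)" by (rule card_mono[OF fin sub])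
  also have "\<dots> \<le> (\<Sum>q\<in>I. card (f q ` Y))" by (rule card_UN_le[OF finI])
  also have "\<dots> \<le> (\<Sum>q\<in>I. card Y)" by (intro sum_mono card_image_le) (simp add: Y_def Ybox_fin)
  also have "\<dots> = 2 * (d - 1) * nat (2 * NB d B + 1) ^ (d - 2)" using cardI by (simp add: Y_def Ybox_card)
  finally show ?thesis .
qed

lemma counting_part:
  assumes d2: "d \<ge> 2"
  shows "(\<lambda>B. real (card (R1 d B)) / real (card (P1 d B))) \<in> O[at_top](\<lambda>B. 1 / B)"
proof -
  define m where "m = d - 2"
  have dm: "d - 1 = Suc m" using d2 unfolding m_def by auto
  define L where "L = 3 * 2 ^ d * (real d + 1)"
  define C where "C = 2 * (real d - 1) * L ^ m"
  have bound: "real (card (R1 d B)) / real (card (P1 d B)) \<le> C / B" if B: "B \<ge> 1" for B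
  proof -
    have N0: "NB d B \<ge> 0" unfolding NB_def using B by simp
    have NL: "real_of_int (2 * NB d B + 1) \<le> L * B"
    proof -
      have "real_of_int (NB d B) \<le> 2^d * (real d + 1) * B" unfolding NB_def by simp
      moreover have "1 * 1 * 1 \<le> 2^d * (real d + 1) * B" using B by (intro mult_mono) auto
      ultimately show ?thesis unfolding L_def by simp
    qed
    have r1: "real (card (R1 d B)) \<le> 2 * (real d - 1) * (L * B) ^ m"
    proof -
      have "real (card (R1 d B)) \<le> real (2 * (d - 1) * nat (2 * NB d B + 1) ^ m)"
        using card_R1[OF d2 B] unfolding m_def by (simp only: of_nat_le_iff)
      also have "\<dots> = 2 * (real d - 1) * real_of_int (2 * NB d B + 1) ^ m"
        using N0 d2 by (simp add: of_nat_diff)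
      also have "\<dots> \<le> 2 * (real d - 1) * (L * B) ^ m"
        using NL N0 d2 by (intro mult_left_mono power_mono) auto
      finally show ?thesis .
    qed
    have p1: "real (card (P1 d B)) \<ge> B ^ Suc m"
    proof -
      have "real (card (P1 d B)) = real_of_int (2 * \<lfloor>B\<rfloor> + 1) ^ Suc m"
        using card_P1[OF d2 B] dm B by simp
      moreover have "B \<le> real_of_int (2 * \<lfloor>B\<rfloor> + 1)" using B by linarith
      moreover have "B ^ Suc m \<le> real_of_int (2 * \<lfloor>B\<rfloor> + 1) ^ Suc m"
        using calculation(2) B by (intro power_mono) auto
      ultimately show ?thesis by simp
    qed
    have Bp: "B ^ Suc m > 0" using B by simp
    have "real (card (R1 d B)) / real (card (P1 d B)) \<le> (2 * (real d - 1) * (L * B) ^ m) / B ^ Suc m"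
      using r1 p1 Bp d2 by (intro frac_le) auto
    also have "\<dots> = C / B" unfolding C_def using B by (simp add: power_mult_distrib field_simps)
    finally show ?thesis .
  qed
  show ?thesis
  proof (rule bigoI[where c = C])
    show "\<forall>\<^sub>F x in at_top. norm (real (card (R1 d x)) / real (card (P1 d x))) \<le> C * norm (1 / x)"
      using eventually_ge_at_top[of "1::real"]
    proof eventually_elim
      case (elim B)
      thus ?case using bound[OF elim] by simp
    qed
  qed
qed

theorem theorem5p1:
  fixes d :: nat
  assumes "d \<ge> 2"
  shows "on_hypersurface (d - 1) (coeff_vec d ` (\<Union>B\<in>{B. B \<ge> 1}. R1 d B))
         \<and> (\<lambda>B. real (card (R1 d B)) / real (card (P1 d B))) \<in> O[at_top](\<lambda>B. 1 / B)"
  using hypersurface_part[OF assms] counting_part[OF assms] by blast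

end
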